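(* For every $x\in(0,\pi)$ and $\theta>0$, $$\lim_{n\to\infty}\sqrt n\sum_{k\ge1}\frac{\sin^2(kx)}{k^2}\big(1-e^{-\theta k^2/n}\big)=\frac{\sqrt{\pi\theta}}{2}.$$ *)

theory Defs
  imports "HOL-Analysis.Analysis"
begin

end

theory Submission
  imports Defs "HOL-Probability.Distributions"
begin

lemma gauss_int:
  fixes c :: real assumes c: "c > 0"
  shows "((\<lambda>t. exp (- c * t\<^sup>2)) has_integral (sqrt pi / (2 * sqrt c))) {0..}"
proof -
  have hb: "has_bochner_integral lborel (\<lambda>x. indicator {0..} x *\<^sub>R exp (- x\<^sup>2)) (sqrt pi / 2)"
    by (rule gaussian_moment_0)
  let ?f = "\<lambda>x::real. indicator {0..} x *\<^sub>R exp (- x\<^sup>2) :: real"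
  have sc: "sqrt c \<noteq> 0" using c by simp
  have i1: "integrable lborel ?f" using hb by (simp add: has_bochner_integral_iff)
  have e1: "(\<integral>x. ?f x \<partial>lborel) = sqrt pi / 2" using hb by (simp add: has_bochner_integral_iff)
  have i2: "integrable lborel (\<lambda>x. ?f (0 + sqrt c * x))"
    by (rule lborel_integrable_real_affine[OF i1 sc])
  have e2: "(\<integral>x. ?f x \<partial>lborel) = \<bar>sqrt c\<bar> *\<^sub>R (\<integral>x. ?f (0 + sqrt c * x) \<partial>lborel)"
    by (rule lborel_integral_real_affine[OF sc])
  have eqf: "(\<lambda>x. ?f (0 + sqrt c * x)) = (\<lambda>x. if x \<in> {0..} then exp (- c * x\<^sup>2) else 0)"
    using c by (auto simp: fun_eq_iff indicator_def power_mult_distrib zero_le_mult_iff)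
  have "((\<lambda>x. ?f (0 + sqrt c * x)) has_integral (\<integral>x. ?f (0 + sqrt c * x) \<partial>lborel)) UNIV"
    by (rule has_integral_integral_lborel[OF i2])
  moreover have "(\<integral>x. ?f (0 + sqrt c * x) \<partial>lborel) = sqrt pi / (2 * sqrt c)"
    using e1 e2 c by (simp add: field_simps)
  ultimately have "((\<lambda>x. if x \<in> {0..} then exp (- c * x\<^sup>2) else 0) has_integral (sqrt pi / (2 * sqrt c))) UNIV"
    unfolding eqf by simp
  then show ?thesis using has_integral_restrict_UNIV[of "{0..}" "\<lambda>t. exp (- c * t\<^sup>2)"] by simp
qed

lemma int_tendsto:
  fixes h :: "real \<Rightarrow> real"
  assumes hI: "(h has_integral I) {0..}" and nn: "\<And>y. y \<ge> 0 \<Longrightarrow> h y \<ge> 0"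
    and ct: "continuous_on {0..} h"
  shows "(\<lambda>n. integral {0..real n} h) \<longlonglongrightarrow> I"
proof -
  have int: "h integrable_on {0..y}" for y
    by (rule integrable_continuous_real) (rule continuous_on_subset[OF ct], auto)
  define g where "g \<equiv> \<lambda>n x. if x \<in> {0..real n} then h x else 0"
  have hg: "(g n has_integral (integral {0..real n} h)) {0..}" for n
    unfolding g_def by (subst has_integral_restrict) (auto intro: int)
  have le: "integral {0..real n} h \<le> I" for n
    using has_integral_subset_le[of "{0..real n}" "{0..}" h "integral {0..real n} h" I] hI int nn
    by auto
  have ge: "integral {0..real n} h \<ge> 0" for n
    using integral_nonneg[OF int] nn by auto
  have *: "h integrable_on {0..} \<and> (\<lambda>n. integral {0..} (g n)) \<longlonglongrightarrow> integral {0..} h"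
  proof (intro monotone_convergence_increasing allI ballI)
    fix n show "g n integrable_on {0..}" using hg by blast
  next
    fix n x show "g n x \<le> g (Suc n) x" using nn by (auto simp: g_def)
  next
    fix x :: real assume x: "x \<in> {0..}"
    have "eventually (\<lambda>n. real n \<ge> x) at_top"
      by (meson eventually_sequentiallyI nat_ceiling_le_eq)
    with x have "eventually (\<lambda>n. g n x = h x) at_top"
      by (simp add: eventually_mono g_def)
    thus "(\<lambda>n. g n x) \<longlonglongrightarrow> h x" by (simp add: tendsto_eventually)
  next
    have "norm (integral {0..} (g n)) \<le> I" for n
      using hg[of n] le[of n] ge[of n] by (simp add: integral_unique)
    thus "bounded (range(\<lambda>k. integral {0..} (g k)))"
      by (metis (no_types, lifting) boundedI rangeE)
  qed
  have "integral {0..} (g n) = integral {0..real n} h" for n using hg[of n] by (simp add: integral_unique)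
  moreover have "integral {0..} h = I" using hI by (simp add: integral_unique)
  ultimately show ?thesis using * by simp
qed

lemma gauss_sum:
  fixes c :: real assumes c: "c > 0"
  shows "\<And>N. (\<Sum>k<N. exp (- c * (real (Suc k))\<^sup>2)) \<le> sqrt pi / (2 * sqrt c)"
    and "summable (\<lambda>k. exp (- c * (real (Suc k))\<^sup>2))"
    and "sqrt pi / (2 * sqrt c) \<le> 1 + (\<Sum>k. exp (- c * (real (Suc k))\<^sup>2))"
proof -
  let ?f = "\<lambda>t::real. exp (- c * t\<^sup>2)"
  let ?I = "sqrt pi / (2 * sqrt c)"
  have ct: "continuous_on {0..} ?f" by (intro continuous_intros)
  interpret A: antimono_fun_sum_integral_diff ?f
  proof
    fix x y :: real assume "x \<ge> 0" "x \<le> y"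
    then have "x\<^sup>2 \<le> y\<^sup>2" by (simp add: power_mono)
    then show "?f y \<le> ?f x" using c by (simp add: mult_left_mono)
  qed (use ct in auto)
  have hI: "(?f has_integral ?I) {0..}" by (rule gauss_int[OF c])
  have int: "?f integrable_on {0..y}" for y
    by (rule integrable_continuous_real) (rule continuous_on_subset[OF ct], auto)
  have leI: "integral {0..real n} ?f \<le> ?I" for n
    using has_integral_subset_le[of "{0..real n}" "{0..}" ?f "integral {0..real n} ?f" ?I] hI int
    by auto
  have shift: "(\<Sum>k\<le>n. ?f (real k)) = 1 + (\<Sum>k<n. exp (- c * (real (Suc k))\<^sup>2))" for n
    unfolding lessThan_Suc_atMost[symmetric] sum.lessThan_Suc_shift by simp
  have sd: "A.sum_integral_diff_series n = (\<Sum>k\<le>n. ?f (real k)) - integral {0..real n} ?f" for n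
    unfolding A.sum_integral_diff_series_def by simp
  have up: "A.sum_integral_diff_series n \<le> 1" for n
  proof -
    have "A.sum_integral_diff_series 0 = 1" unfolding A.sum_integral_diff_series_def by simp
    then show ?thesis using A.sum_integral_diff_series_antimono[of 0 n] by linarith
  qed
  have lo: "A.sum_integral_diff_series n \<ge> 0" for n by (rule A.sum_integral_diff_series_nonneg)
  show U: "(\<Sum>k<N. exp (- c * (real (Suc k))\<^sup>2)) \<le> ?I" for N
    using up[of N] leI[of N] shift[of N] sd[of N] by linarith
  show S: "summable (\<lambda>k. exp (- c * (real (Suc k))\<^sup>2))"
  proof (rule bounded_imp_summable[where B="?I"])
    fix n show "(\<Sum>k\<le>n. exp (- c * (real (Suc k))\<^sup>2)) \<le> ?I"
      using U[of "Suc n"] by (simp add: lessThan_Suc_atMost)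
  qed simp
  have L: "integral {0..real n} ?f \<le> 1 + (\<Sum>k<n. exp (- c * (real (Suc k))\<^sup>2))" for n
    using lo[of n] shift[of n] sd[of n] by linarith
  have t1: "(\<lambda>n. integral {0..real n} ?f) \<longlonglongrightarrow> ?I"
    by (rule int_tendsto[OF hI]) (use ct in auto)
  have t2: "(\<lambda>n. 1 + (\<Sum>k<n. exp (- c * (real (Suc k))\<^sup>2))) \<longlonglongrightarrow> 1 + (\<Sum>k. exp (- c * (real (Suc k))\<^sup>2))"
    by (intro tendsto_add tendsto_const summable_LIMSEQ S)
  show "?I \<le> 1 + (\<Sum>k. exp (- c * (real (Suc k))\<^sup>2))"
    using t1 t2 L by (intro LIMSEQ_le[OF t1 t2]) auto
qed

definition aa :: "real \<Rightarrow> nat \<Rightarrow> real" where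
  "aa c k = (1 - exp (- c * (real (Suc k))\<^sup>2)) / (real (Suc k))\<^sup>2"

lemma aa_nonneg: "c \<ge> 0 \<Longrightarrow> aa c k \<ge> 0"
  by (auto simp: aa_def intro!: divide_nonneg_pos)

lemma aa_le: "c \<ge> 0 \<Longrightarrow> aa c k \<le> inverse ((real (Suc k))\<^sup>2)"
  by (auto simp: aa_def divide_inverse intro!: mult_right_mono)

lemma summable_inv_sq: "summable (\<lambda>k. inverse ((real (Suc k))\<^sup>2))"
proof -
  have "summable (\<lambda>k. inverse ((real k)\<^sup>2))" by (rule inverse_power_summable) simp
  from summable_ignore_initial_segment[OF this, of 1] show ?thesis by simp
qed

lemma aa_summable: "c \<ge> 0 \<Longrightarrow> summable (aa c)"
  by (rule summable_comparison_test'[OF summable_inv_sq, of 0]) (simp add: aa_nonneg aa_le del: of_nat_Suc)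

lemma aa_deriv: "((\<lambda>c. \<Sum>k<N. aa c k) has_real_derivative (\<Sum>k<N. exp (- c * (real (Suc k))\<^sup>2))) (at c)"
  unfolding aa_def
  by (rule DERIV_sum) (auto intro!: derivative_eq_intros simp: field_simps)

lemma F_upper:
  assumes b: "b \<ge> 0"
  shows "suminf (aa b) \<le> sqrt pi * sqrt b"
proof (rule suminf_le_const[OF aa_summable[OF b]])
  fix N
  let ?f = "\<lambda>c. (\<Sum>k<N. aa c k) - sqrt pi * sqrt c"
  have "?f 0 \<ge> ?f b"
  proof (rule DERIV_nonpos_imp_decreasing_open[OF b])
    fix x assume x: "0 < x" "x < b"
    have "(?f has_real_derivative (\<Sum>k<N. exp (- x * (real (Suc k))\<^sup>2)) - sqrt pi * (inverse (sqrt x) / 2)) (at x)"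
      by (intro DERIV_diff[OF aa_deriv] DERIV_cmult DERIV_real_sqrt x)
    moreover have "(\<Sum>k<N. exp (- x * (real (Suc k))\<^sup>2)) - sqrt pi * (inverse (sqrt x) / 2) \<le> 0"
      using gauss_sum(1)[OF x(1), of N] by (simp add: field_simps)
    ultimately show "\<exists>y. (?f has_real_derivative y) (at x) \<and> y \<le> 0" by blast
  next
    show "continuous_on {0..b} ?f" unfolding aa_def by (intro continuous_intros) auto
  qed
  then show "(\<Sum>k<N. aa b k) \<le> sqrt pi * sqrt b" by (simp add: aa_def)
qed

lemma F_lower:
  assumes a: "0 < a" and ab: "a \<le> b"
  shows "sqrt pi * sqrt b - sqrt pi * sqrt a - (b - a) \<le> suminf (aa b)"
proof -
  define ga where "ga c k = exp (- c * (real (Suc k))\<^sup>2)" for c k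
  define T where "T N = (\<Sum>k. ga a k) - (\<Sum>k<N. ga a k)" for N
  have sg: "summable (ga c)" if "c > 0" for c
    unfolding ga_def by (rule gauss_sum(2)[OF that])
  have tail: "(\<Sum>k. ga c k) - (\<Sum>k<N. ga c k) \<le> T N" if c: "a \<le> c" for c N
  proof -
    have c0: "c > 0" using a c by simp
    have "(\<Sum>k. ga c k) - (\<Sum>k<N. ga c k) = (\<Sum>k. ga c (k + N))"
      using suminf_split_initial_segment[OF sg[OF c0], of N] by simp
    also have "\<dots> \<le> (\<Sum>k. ga a (k + N))"
    proof (rule suminf_le)
      fix k
      have "(real (Suc (k + N)))\<^sup>2 \<ge> 0" by simp
      then show "ga c (k + N) \<le> ga a (k + N)" unfolding ga_def using c
        by (simp add: mult_right_mono)
    qed (auto intro: summable_ignore_initial_segment sg c0 a)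
    also have "\<dots> = T N"
      using suminf_split_initial_segment[OF sg[OF a], of N] by (simp add: T_def)
    finally show ?thesis .
  qed
  have step: "sqrt pi * sqrt b - sqrt pi * sqrt a - (1 + T N) * (b - a) \<le> (\<Sum>k<N. aa b k)" for N
  proof -
    let ?f = "\<lambda>c. (\<Sum>k<N. aa c k) - sqrt pi * sqrt c + (1 + T N) * c"
    have "?f a \<le> ?f b"
    proof (rule DERIV_nonneg_imp_increasing_open[OF ab])
      fix x assume x: "a < x" "x < b"
      have x0: "x > 0" using a x by simp
      have "(?f has_real_derivative (\<Sum>k<N. exp (- x * (real (Suc k))\<^sup>2)) - sqrt pi * (inverse (sqrt x) / 2) + (1 + T N) * 1) (at x)"
        by (intro DERIV_add DERIV_diff[OF aa_deriv] DERIV_cmult DERIV_real_sqrt x0 DERIV_ident)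
      moreover have "(\<Sum>k<N. exp (- x * (real (Suc k))\<^sup>2)) - sqrt pi * (inverse (sqrt x) / 2) + (1 + T N) * 1 \<ge> 0"
      proof -
        have "sqrt pi / (2 * sqrt x) \<le> 1 + (\<Sum>k. ga x k)"
          using gauss_sum(3)[OF x0] by (simp add: ga_def)
        moreover have "(\<Sum>k. ga x k) - (\<Sum>k<N. ga x k) \<le> T N" using tail[of x] x by simp
        ultimately show ?thesis by (simp add: ga_def field_simps)
      qed
      ultimately show "\<exists>y. (?f has_real_derivative y) (at x) \<and> y \<ge> 0" by blast
    next
      show "continuous_on {a..b} ?f" unfolding aa_def by (intro continuous_intros) auto
    qed
    moreover have "(\<Sum>k<N. aa a k) \<ge> 0" using a by (intro sum_nonneg aa_nonneg) simp
    ultimately show ?thesis by (simp add: algebra_simps)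
  qed
  have T0: "T \<longlonglongrightarrow> 0"
  proof -
    have "(\<lambda>N. (\<Sum>k. ga a k) - (\<Sum>k<N. ga a k)) \<longlonglongrightarrow> (\<Sum>k. ga a k) - (\<Sum>k. ga a k)"
      by (intro tendsto_diff tendsto_const summable_LIMSEQ sg a)
    then show ?thesis by (simp add: T_def[abs_def])
  qed
  have l1: "(\<lambda>N. sqrt pi * sqrt b - sqrt pi * sqrt a - (1 + T N) * (b - a)) \<longlonglongrightarrow> sqrt pi * sqrt b - sqrt pi * sqrt a - (1 + 0) * (b - a)"
    by (intro tendsto_intros T0)
  have l2: "(\<lambda>N. \<Sum>k<N. aa b k) \<longlonglongrightarrow> (\<Sum>k. aa b k)"
    using a ab by (intro summable_LIMSEQ aa_summable) simp
  from LIMSEQ_le[OF l1 l2] step show ?thesis by simp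
qed

lemma cos_sum_id:
  fixes x :: real
  shows "2 * sin x * (\<Sum>j<n. cos (2 * real (Suc j) * x)) = sin ((2 * real n + 1) * x) - sin x"
proof (induction n)
  case 0 then show ?case by simp
next
  case (Suc n)
  have e1: "sin ((2 * real (Suc n) + 1) * x) = sin (2 * real (Suc n) * x + x)"
    by (simp add: algebra_simps)
  have e2: "sin ((2 * real n + 1) * x) = sin (2 * real (Suc n) * x - x)"
    by (simp add: algebra_simps)
  have "2 * sin x * (\<Sum>j<Suc n. cos (2 * real (Suc j) * x))
        = 2 * sin x * (\<Sum>j<n. cos (2 * real (Suc j) * x)) + 2 * sin x * cos (2 * real (Suc n) * x)"
    by (simp add: algebra_simps)
  also have "\<dots> = sin ((2 * real n + 1) * x) - sin x + 2 * sin x * cos (2 * real (Suc n) * x)"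
    using Suc by simp
  also have "\<dots> = sin ((2 * real (Suc n) + 1) * x) - sin x"
    unfolding e1 e2 sin_add sin_diff by (simp add: algebra_simps)
  finally show ?case .
qed

lemma cos_sum_bound:
  fixes x :: real assumes s: "sin x > 0"
  shows "\<bar>\<Sum>j<n. cos (2 * real (Suc j) * x)\<bar> \<le> 1 / sin x"
proof -
  have "\<bar>2 * sin x * (\<Sum>j<n. cos (2 * real (Suc j) * x))\<bar> \<le> 2"
    unfolding cos_sum_id
    using abs_sin_le_one[of "(2 * real n + 1) * x"] abs_sin_le_one[of x] by linarith
  then have "2 * sin x * \<bar>\<Sum>j<n. cos (2 * real (Suc j) * x)\<bar> \<le> 2"
    using s by (simp add: abs_mult)
  then show ?thesis using s by (simp add: field_simps)
qed

lemma abel_bound: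
  fixes w b :: "nat \<Rightarrow> real"
  assumes D: "\<And>n. \<bar>\<Sum>j<n. w j\<bar> \<le> M"
    and dec: "\<And>k. b (Suc k) \<le> b k" and nn: "\<And>k. b k \<ge> 0"
  shows "\<bar>\<Sum>j<n. w j * b j\<bar> \<le> M * b 0"
proof -
  define Dn where "Dn n = (\<Sum>j<n. w j)" for n
  have id: "(\<Sum>j<n. w j * b j) = Dn n * b n + (\<Sum>j<n. Dn (Suc j) * (b j - b (Suc j)))"
  proof (induction n)
    case 0 then show ?case by (simp add: Dn_def)
  next
    case (Suc n) then show ?case by (simp add: Dn_def algebra_simps)
  qed
  have "\<bar>Dn n * b n\<bar> \<le> M * b n"
    using D[of n] nn[of n] by (simp add: Dn_def abs_mult mult_right_mono)
  moreover have "\<bar>\<Sum>j<n. Dn (Suc j) * (b j - b (Suc j))\<bar> \<le> (\<Sum>j<n. M * (b j - b (Suc j)))"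
  proof -
    have "\<bar>\<Sum>j<n. Dn (Suc j) * (b j - b (Suc j))\<bar> \<le> (\<Sum>j<n. \<bar>Dn (Suc j) * (b j - b (Suc j))\<bar>)"
      by (rule sum_abs)
    also have "\<dots> \<le> (\<Sum>j<n. M * (b j - b (Suc j)))"
    proof (rule sum_mono)
      fix j
      have "b j - b (Suc j) \<ge> 0" using dec[of j] by simp
      then show "\<bar>Dn (Suc j) * (b j - b (Suc j))\<bar> \<le> M * (b j - b (Suc j))"
        using D[of "Suc j"] by (simp add: Dn_def abs_mult mult_right_mono)
    qed
    finally show ?thesis .
  qed
  moreover have "(\<Sum>j<n. M * (b j - b (Suc j))) = M * (b 0 - b n)"
    by (simp add: sum_distrib_left[symmetric] sum_lessThan_telescope')
  ultimately show ?thesis unfolding id by (simp add: algebra_simps)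
qed

lemma psi_mono:
  fixes u v :: real assumes u: "0 < u" and uv: "u \<le> v"
  shows "(1 - exp (- v)) / v \<le> (1 - exp (- u)) / u"
proof (rule DERIV_nonpos_imp_nonincreasing[OF uv])
  fix t assume t: "u \<le> t" "t \<le> v"
  then have t0: "t > 0" using u by simp
  have "((\<lambda>t. (1 - exp (- t)) / t) has_real_derivative (exp (- t) * t - (1 - exp (- t))) / t\<^sup>2) (at t)"
    using t0 by (auto intro!: derivative_eq_intros simp: power2_eq_square field_simps)
  moreover have "(exp (- t) * t - (1 - exp (- t))) / t\<^sup>2 \<le> 0"
  proof -
    have "1 + t \<le> exp t" by (rule exp_ge_add_one_self)
    then have "exp (- t) * (1 + t) \<le> exp (- t) * exp t" by (simp add: mult_left_mono)
    then have "exp (- t) * (1 + t) \<le> 1" by (simp add: exp_minus field_simps)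
    then show ?thesis by (intro divide_nonpos_nonneg) (simp_all add: algebra_simps)
  qed
  ultimately show "\<exists>y. ((\<lambda>t. (1 - exp (- t)) / t) has_real_derivative y) (at t) \<and> y \<le> 0" by blast
qed

lemma aa_mono:
  assumes c: "c \<ge> 0" shows "aa c (Suc k) \<le> aa c k"
proof (cases "c = 0")
  case True then show ?thesis by (simp add: aa_def)
next
  case False
  then have c0: "c > 0" using c by simp
  have eq: "aa c m = c * ((1 - exp (- (c * (real (Suc m))\<^sup>2))) / (c * (real (Suc m))\<^sup>2))" for m
    using c0 by (simp add: aa_def field_simps)
  have "(1 - exp (- (c * (real (Suc (Suc k)))\<^sup>2))) / (c * (real (Suc (Suc k)))\<^sup>2)
        \<le> (1 - exp (- (c * (real (Suc k))\<^sup>2))) / (c * (real (Suc k))\<^sup>2)"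
    by (rule psi_mono) (use c0 in \<open>auto intro!: mult_left_mono power_mono\<close>)
  then show ?thesis unfolding eq using c0 by (intro mult_left_mono) auto
qed

lemma osc_bound:
  fixes x c :: real assumes s: "sin x > 0" and c: "c \<ge> 0"
  shows "\<bar>\<Sum>j. cos (2 * real (Suc j) * x) * aa c j\<bar> \<le> c / sin x"
proof -
  let ?w = "\<lambda>j. cos (2 * real (Suc j) * x)"
  have pb: "\<bar>\<Sum>j<n. ?w j * aa c j\<bar> \<le> (1 / sin x) * aa c 0" for n
    by (rule abel_bound[OF cos_sum_bound[OF s]]) (auto intro: aa_mono aa_nonneg c)
  have a0: "aa c 0 \<le> c"
    using exp_ge_add_one_self[of "- c"] by (simp add: aa_def)
  have sm: "summable (\<lambda>j. ?w j * aa c j)"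
  proof (rule summable_comparison_test'[OF aa_summable[OF c], of 0])
    fix n
    have "\<bar>?w n\<bar> * aa c n \<le> 1 * aa c n"
      by (intro mult_right_mono abs_cos_le_one aa_nonneg c)
    then show "norm (?w n * aa c n) \<le> aa c n" using aa_nonneg[OF c, of n] by (simp add: abs_mult)
  qed
  have "(\<lambda>n. \<bar>\<Sum>j<n. ?w j * aa c j\<bar>) \<longlonglongrightarrow> \<bar>\<Sum>j. ?w j * aa c j\<bar>"
    by (intro tendsto_rabs summable_LIMSEQ sm)
  then have "\<bar>\<Sum>j. ?w j * aa c j\<bar> \<le> (1 / sin x) * aa c 0"
    by (rule LIMSEQ_le_const2) (use pb in auto)
  also have "\<dots> \<le> (1 / sin x) * c" using a0 s by (intro mult_left_mono) auto
  finally show ?thesis by simp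
qed

lemma lin_aux:
  fixes P Q c d A C W :: real
  assumes "P - Q - (c - d) \<le> A" "0 \<le> d" "C \<le> W" shows "(P - Q - c) / 2 - W / 2 \<le> A / 2 - C / 2"
proof -
  have "P - Q - c \<le> A" using assms by linarith
  then show ?thesis using assms(3) by (simp add: field_simps)
qed

theorem lemmaA4:
  fixes x \<theta> :: real
  assumes "0 < x" and "x < pi" and "0 < \<theta>"
  shows "(\<lambda>n::nat. sqrt (real n) *
            (\<Sum>j. (sin (real (Suc j) * x))\<^sup>2 / (real (Suc j))\<^sup>2 *
                   (1 - exp (- \<theta> * (real (Suc j))\<^sup>2 / real n))))
         \<longlonglongrightarrow> sqrt (pi * \<theta>) / 2"
proof -
  have s: "sin x > 0" using assms by (intro sin_gt_zero) auto
  have th: "\<theta> > 0" using assms by simp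
  define r where "r n = sqrt (inverse (real n))" for n :: nat
  define S where "S n = (\<Sum>j. (sin (real (Suc j) * x))\<^sup>2 / (real (Suc j))\<^sup>2 *
                   (1 - exp (- \<theta> * (real (Suc j))\<^sup>2 / real n)))" for n :: nat
  define L where "L n = sqrt pi * sqrt \<theta> / 2 - (sqrt pi * sqrt \<theta> + \<theta> + \<theta> / sin x) / 2 * r n" for n
  define U where "U n = sqrt pi * sqrt \<theta> / 2 + \<theta> / sin x / 2 * r n" for n
  have r0: "r \<longlonglongrightarrow> 0"
    unfolding r_def[abs_def] using tendsto_real_sqrt[OF lim_inverse_n] by simp
  have lL: "L \<longlonglongrightarrow> sqrt pi * sqrt \<theta> / 2 - (sqrt pi * sqrt \<theta> + \<theta> + \<theta> / sin x) / 2 * 0"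
    unfolding L_def[abs_def] by (intro tendsto_intros r0)
  have lU: "U \<longlonglongrightarrow> sqrt pi * sqrt \<theta> / 2 + \<theta> / sin x / 2 * 0"
    unfolding U_def[abs_def] by (intro tendsto_intros r0)
  have bounds: "L n \<le> sqrt (real n) * S n \<and> sqrt (real n) * S n \<le> U n" if n: "n \<ge> 1" for n
  proof -
    define c where "c = \<theta> / real n"
    have c0: "c > 0" using n th by (simp add: c_def)
    let ?w = "\<lambda>j. cos (2 * real (Suc j) * x)"
    have trm: "(sin (real (Suc j) * x))\<^sup>2 / (real (Suc j))\<^sup>2 *
                   (1 - exp (- \<theta> * (real (Suc j))\<^sup>2 / real n)) = aa c j / 2 - ?w j * aa c j / 2" for j
    proof -
      have "?w j = 1 - 2 * (sin (real (Suc j) * x))\<^sup>2"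
        using cos_double_sin[of "real (Suc j) * x"] by (simp only: mult.assoc)
      moreover have "- \<theta> * (real (Suc j))\<^sup>2 / real n = - c * (real (Suc j))\<^sup>2"
        by (simp add: c_def)
      ultimately show ?thesis unfolding aa_def by (simp only:) (simp add: field_simps)
    qed
    have sa: "summable (aa c)" using c0 by (intro aa_summable) simp
    have sw: "summable (\<lambda>j. ?w j * aa c j)"
    proof (rule summable_comparison_test'[OF sa, of 0])
      fix m
      have "\<bar>?w m\<bar> * aa c m \<le> 1 * aa c m"
        using c0 by (intro mult_right_mono abs_cos_le_one aa_nonneg) auto
      then show "norm (?w m * aa c m) \<le> aa c m" using aa_nonneg[of c m] c0 by (simp add: abs_mult)
    qed
    have Seq: "S n = (\<Sum>j. aa c j) / 2 - (\<Sum>j. ?w j * aa c j) / 2"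
    proof -
      have "S n = (\<Sum>j. aa c j / 2 - ?w j * aa c j / 2)" unfolding S_def trm ..
      also have "\<dots> = (\<Sum>j. aa c j / 2) - (\<Sum>j. ?w j * aa c j / 2)"
        by (rule suminf_diff[symmetric]) (intro summable_divide sa sw)+
      also have "\<dots> = (\<Sum>j. aa c j) / 2 - (\<Sum>j. ?w j * aa c j) / 2"
        using suminf_divide[OF sa, of 2] suminf_divide[OF sw, of 2] by simp
      finally show ?thesis .
    qed
    have osc: "\<bar>\<Sum>j. ?w j * aa c j\<bar> \<le> c / sin x" using osc_bound[OF s, of c] c0 by simp
    have up: "suminf (aa c) \<le> sqrt pi * sqrt c" using F_upper[of c] c0 by simp
    have lo: "sqrt pi * sqrt c - sqrt pi * sqrt (c / real n) - (c - c / real n) \<le> suminf (aa c)"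
      using F_lower[of "c / real n" c] c0 n by (simp add: divide_le_eq)
    have sn: "sqrt (real n) > 0" using n by simp
    have e1: "sqrt (real n) * sqrt c = sqrt \<theta>"
      using n th by (simp add: c_def real_sqrt_mult[symmetric])
    have nn: "real n = sqrt (real n) * sqrt (real n)" by simp
    have rn: "r n = 1 / sqrt (real n)" unfolding r_def by (simp add: real_sqrt_inverse divide_inverse)
    have e2: "sqrt (real n) * c = \<theta> * r n"
      unfolding rn c_def using sn by (subst nn) (simp add: field_simps)
    have q: "sqrt (c / real n) = sqrt \<theta> / real n"
    proof -
      have "c / real n = \<theta> / (real n * real n)" by (simp add: c_def)
      then show ?thesis by (simp add: real_sqrt_divide)
    qed
    have e3: "sqrt (real n) * sqrt (c / real n) = sqrt \<theta> * r n"
      unfolding q rn using sn by (subst (2) nn) (simp add: field_simps)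
    have "sqrt (real n) * S n \<le> sqrt (real n) * (sqrt pi * sqrt c / 2 + c / sin x / 2)"
      unfolding Seq using up osc sn by (intro mult_left_mono) (auto simp: abs_le_iff)
    also have "\<dots> = sqrt pi * (sqrt (real n) * sqrt c) / 2 + (sqrt (real n) * c) / sin x / 2"
      by (simp add: algebra_simps)
    also have "\<dots> = U n" unfolding U_def e1 e2 by (simp add: algebra_simps)
    finally have A: "sqrt (real n) * S n \<le> U n" .
    have "sqrt (real n) * ((sqrt pi * sqrt c - sqrt pi * sqrt (c / real n) - c) / 2 - c / sin x / 2) \<le> sqrt (real n) * S n"
    proof (rule mult_left_mono)
      have d0: "0 \<le> c / real n" using c0 by simp
      show "(sqrt pi * sqrt c - sqrt pi * sqrt (c / real n) - c) / 2 - c / sin x / 2 \<le> S n"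
        unfolding Seq by (rule lin_aux[OF lo d0 abs_le_D1[OF osc]])
    qed (use sn in simp)
    moreover have "sqrt (real n) * ((sqrt pi * sqrt c - sqrt pi * sqrt (c / real n) - c) / 2 - c / sin x / 2)
       = sqrt pi * (sqrt (real n) * sqrt c) / 2 - sqrt pi * (sqrt (real n) * sqrt (c / real n)) / 2
         - (sqrt (real n) * c) / 2 - (sqrt (real n) * c) / sin x / 2"
      using s by (simp add: field_simps)
    moreover have "\<dots> = L n" unfolding L_def e1 e2 e3 by (simp add: algebra_simps)
    ultimately have B: "L n \<le> sqrt (real n) * S n" by simp
    show ?thesis using A B by simp
  qed
  have limeq: "sqrt pi * sqrt \<theta> / 2 = sqrt (pi * \<theta>) / 2" by (simp add: real_sqrt_mult)
  have "(\<lambda>n. sqrt (real n) * S n) \<longlonglongrightarrow> sqrt pi * sqrt \<theta> / 2"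
  proof (rule tendsto_sandwich[of L _ _ U])
    show "\<forall>\<^sub>F n in sequentially. L n \<le> sqrt (real n) * S n"
      using bounds by (intro eventually_sequentiallyI[of 1]) auto
    show "\<forall>\<^sub>F n in sequentially. sqrt (real n) * S n \<le> U n"
      using bounds by (intro eventually_sequentiallyI[of 1]) auto
  qed (use lL lU in simp_all)
  then show ?thesis unfolding S_def limeq .
qed

end
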